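(* Let $N$ be a finite abelian group, $F$ a finite field, $R=F[N]$, and let $A\in R^{r_A\times n_A}$, $B\in R^{r_B\times n_B}$. Suppose the $F$-linear classical codes $C_A^\perp=\ker\boldsymbol A$ and $C_B^\perp=\ker\boldsymbol B$ are both zero. Then the quasi-abelian LP code $\mathrm{LP}[A,B]$ is trivial, i.e., has dimension $0$.
   Context: For $x\in R=F[N]$, $\mathrm L_N(x)$ is the $|N|\times|N|$ matrix $[\mathrm L_N(x)]_{\alpha,\beta}=\sum_g x_g\delta_{\alpha,g\beta}$. For a matrix $X$ over $R$, $\boldsymbol X$ denotes the matrix over $F$ obtained by replacing every entry $x$ by the block $\mathrm L_N(x)$; $\ker\boldsymbol X$ is its null space (vectors $u$ with $\boldsymbol Xu=0$). The LP code $\mathrm{LP}[A,B]$ is the CSS code over $F$ with $\boldsymbol H_X=\boldsymbol{\bigl(A\otimes I_{r_B}\ \ I_{r_A}\otimes B\bigr)}$ and $\boldsymbol H_Z=\Bigl(\boldsymbol{\begin{pmatrix}I_{n_A}\otimes B\\ -A\otimes I_{n_B}\end{pmatrix}}\Bigr)^T$, where $I_m$ is the $m\times m$ identity over $R$ and $\otimes$ is the Kronecker product over the commutative ring $R$; its dimension is $n-\mathrm{rank}\boldsymbol H_X-\mathrm{rank}\boldsymbol H_Z$ with $n=|N|(n_Ar_B+r_An_B)$. *)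

theory Defs
  imports "HOL-Library.Cardinality" "Jordan_Normal_Form.DL_Rank" "Jordan_Normal_Form.Matrix_Kernel"
begin

text \<open>The finite abelian group N is a finite type of class ab_group_add (written additively),
  the finite field F is a finite type of class field. An element x of the group algebra
  R = F[N] is a function N \<Rightarrow> F (x g = coefficient of g).\<close>

type_synonym ('f, 'n) grpalg = "'n \<Rightarrow> 'f"

definition ga_zero :: "('f::field, 'n::{finite,ab_group_add}) grpalg" where
  "ga_zero = (\<lambda>g. 0)"

definition ga_one :: "('f::field, 'n::{finite,ab_group_add}) grpalg" where
  "ga_one = (\<lambda>g. if g = 0 then 1 else 0)"

definition ga_mult :: "('f::field, 'n::{finite,ab_group_add}) grpalg \<Rightarrow> ('f, 'n) grpalg \<Rightarrow> ('f, 'n) grpalg" where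
  "ga_mult x y = (\<lambda>g. \<Sum>h\<in>UNIV. x h * y (g - h))"

definition ga_uminus :: "('f::field, 'n::{finite,ab_group_add}) grpalg \<Rightarrow> ('f, 'n) grpalg" where
  "ga_uminus x = (\<lambda>g. - x g)"

definition ga_id :: "nat \<Rightarrow> ('f::field, 'n::{finite,ab_group_add}) grpalg mat" where
  "ga_id m = mat m m (\<lambda>(i,j). if i = j then ga_one else ga_zero)"

definition ga_kron :: "('f::field, 'n::{finite,ab_group_add}) grpalg mat \<Rightarrow> ('f, 'n) grpalg mat \<Rightarrow> ('f, 'n) grpalg mat" where
  "ga_kron X Y = mat (dim_row X * dim_row Y) (dim_col X * dim_col Y)
     (\<lambda>(i,j). ga_mult (X $$ (i div dim_row Y, j div dim_col Y)) (Y $$ (i mod dim_row Y, j mod dim_col Y)))"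

definition ga_neg_mat :: "('f::field, 'n::{finite,ab_group_add}) grpalg mat \<Rightarrow> ('f, 'n) grpalg mat" where
  "ga_neg_mat X = map_mat ga_uminus X"

definition hcat :: "'a mat \<Rightarrow> 'a mat \<Rightarrow> 'a mat" where
  "hcat X Y = mat (dim_row X) (dim_col X + dim_col Y)
     (\<lambda>(i,j). if j < dim_col X then X $$ (i,j) else Y $$ (i, j - dim_col X))"

definition vcat :: "'a mat \<Rightarrow> 'a mat \<Rightarrow> 'a mat" where
  "vcat X Y = mat (dim_row X + dim_row Y) (dim_col X)
     (\<lambda>(i,j). if i < dim_row X then X $$ (i,j) else Y $$ (i - dim_row X, j))"

text \<open>A fixed enumeration of the group N (the rank is independent of its choice).\<close>
definition grp_enum :: "'n::finite list" where
  "grp_enum = (SOME xs. distinct xs \<and> set xs = UNIV)"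

definition L_N :: "('f::field, 'n::{finite,ab_group_add}) grpalg \<Rightarrow> 'f mat" where
  "L_N x = mat (CARD('n)) (CARD('n))
     (\<lambda>(a,b). \<Sum>g\<in>UNIV. x g * (if grp_enum ! a = g + grp_enum ! b then 1 else 0))"

text \<open>Bold X: replace every entry x by the block L_N(x).\<close>
definition lift_mat :: "('f::field, 'n::{finite,ab_group_add}) grpalg mat \<Rightarrow> 'f mat" where
  "lift_mat X = mat (dim_row X * CARD('n)) (dim_col X * CARD('n))
     (\<lambda>(i,j). L_N (X $$ (i div CARD('n), j div CARD('n))) $$ (i mod CARD('n), j mod CARD('n)))"

definition frank :: "'f::field mat \<Rightarrow> nat" where
  "frank M = vec_space.rank (dim_row M) M"

definition LP_HX :: "('f::field, 'n::{finite,ab_group_add}) grpalg mat \<Rightarrow> ('f, 'n) grpalg mat \<Rightarrow> 'f mat" where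
  "LP_HX A B = lift_mat (hcat (ga_kron A (ga_id (dim_row B))) (ga_kron (ga_id (dim_row A)) B))"

definition LP_HZ :: "('f::field, 'n::{finite,ab_group_add}) grpalg mat \<Rightarrow> ('f, 'n) grpalg mat \<Rightarrow> 'f mat" where
  "LP_HZ A B = transpose_mat (lift_mat (vcat (ga_kron (ga_id (dim_col A)) B)
                                            (ga_neg_mat (ga_kron A (ga_id (dim_col B))))))"

text \<open>Dimension of the CSS code LP[A,B] (as an integer, to avoid truncated subtraction).\<close>
definition LP_dim :: "('f::field, 'n::{finite,ab_group_add}) grpalg mat \<Rightarrow> ('f, 'n) grpalg mat \<Rightarrow> int" where
  "LP_dim A B = int (CARD('n) * (dim_col A * dim_row B + dim_row A * dim_col B))
                - int (frank (LP_HX A B)) - int (frank (LP_HZ A B))"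

end

theory Submission
  imports Defs
begin

datatype ('f,'n) rr = RR (un: "'n \<Rightarrow> 'f")

lemma sum_shift: "(\<Sum>h\<in>(UNIV::'n::{finite,ab_group_add} set). f (h + c)) = sum f UNIV"
  by (rule sum.reindex_bij_witness[where i="\<lambda>h. h - c" and j="\<lambda>h. h + c"]) auto

lemma sum_refl: "(\<Sum>h\<in>(UNIV::'n::{finite,ab_group_add} set). f (c - h)) = sum f UNIV"
  by (rule sum.reindex_bij_witness[where i="\<lambda>h. c - h" and j="\<lambda>h. c - h"]) auto

lemma sum_negate: "(\<Sum>h\<in>(UNIV::'n::{finite,ab_group_add} set). f (- h)) = sum f UNIV"
  by (rule sum.reindex_bij_witness[where i="\<lambda>h. - h" and j="\<lambda>h. - h"]) auto

lemma ga_mult_comm: "ga_mult x y = ga_mult y (x::('f::field,'n::{finite,ab_group_add}) grpalg)"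
proof
  fix g
  have "ga_mult x y g = (\<Sum>h\<in>UNIV. x (g - h) * y (g - (g - h)))"
    unfolding ga_mult_def by (rule sum_refl[symmetric, where f="\<lambda>h. x h * y (g - h)"])
  also have "\<dots> = ga_mult y x g" unfolding ga_mult_def by (simp add: mult.commute)
  finally show "ga_mult x y g = ga_mult y x g" .
qed

lemma ga_mult_assoc: "ga_mult (ga_mult x y) z = ga_mult x (ga_mult y (z::('f::field,'n::{finite,ab_group_add}) grpalg))"
proof
  fix g
  have "ga_mult (ga_mult x y) z g = (\<Sum>h\<in>UNIV. \<Sum>k\<in>UNIV. x k * y (h - k) * z (g - h))"
    unfolding ga_mult_def by (simp add: sum_distrib_right)
  also have "\<dots> = (\<Sum>k\<in>UNIV. \<Sum>h\<in>UNIV. x k * (y (h - k) * z (g - h)))"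
    by (subst sum.swap) (simp add: mult.assoc)
  also have "\<dots> = (\<Sum>k\<in>UNIV. \<Sum>m\<in>UNIV. x k * (y m * z (g - k - m)))"
  proof (rule sum.cong[OF refl])
    fix k
    show "(\<Sum>h\<in>UNIV. x k * (y (h - k) * z (g - h))) = (\<Sum>m\<in>UNIV. x k * (y m * z (g - k - m)))"
      using sum_shift[where c=k and f="\<lambda>h. x k * (y (h - k) * z (g - h))"]
      by (simp add: algebra_simps)
  qed
  also have "\<dots> = ga_mult x (ga_mult y z) g" unfolding ga_mult_def by (simp add: sum_distrib_left)
  finally show "ga_mult (ga_mult x y) z g = ga_mult x (ga_mult y z) g" .
qed

lemma ga_mult_one: "ga_mult ga_one x = (x::('f::field,'n::{finite,ab_group_add}) grpalg)"
proof
  fix g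
  have "ga_mult ga_one x g = (\<Sum>h\<in>UNIV. if h = 0 then x (g - h) else 0)"
    unfolding ga_mult_def ga_one_def by (rule sum.cong) auto
  also have "\<dots> = x g" by (simp add: sum.delta)
  finally show "ga_mult ga_one x g = x g" .
qed

lemma ga_mult_distrib: "ga_mult (\<lambda>g. x g + y g) z = (\<lambda>g. ga_mult x z g + ga_mult y z g)"
  unfolding ga_mult_def by (auto simp: algebra_simps sum.distrib)

instantiation rr :: (field, "{finite,ab_group_add}") comm_ring_1
begin
definition zero_rr_def: "0 = RR (\<lambda>g. 0)"
definition one_rr_def: "1 = RR ga_one"
definition plus_rr_def: "x + y = RR (\<lambda>g. un x g + un y g)"
definition uminus_rr_def: "- x = RR (\<lambda>g. - un x g)"
definition minus_rr_def: "x - y = RR (\<lambda>g. un x g - un y g)"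
definition times_rr_def: "x * y = RR (ga_mult (un x) (un y))"
instance
proof
  fix a b c :: "('a,'b) rr"
  show "a * b * c = a * (b * c)" by (simp add: times_rr_def ga_mult_assoc)
  show "a * b = b * a" by (simp add: times_rr_def ga_mult_comm)
  show "1 * a = a" by (simp add: times_rr_def one_rr_def ga_mult_one)
  show "(a + b) * c = a * c + b * c" by (simp add: times_rr_def plus_rr_def ga_mult_distrib)
  show "a + b + c = a + (b + c)" by (simp add: plus_rr_def algebra_simps)
  show "a + b = b + a" by (simp add: plus_rr_def algebra_simps)
  show "0 + a = a" by (simp add: plus_rr_def zero_rr_def)
  show "- a + a = 0" by (simp add: plus_rr_def zero_rr_def uminus_rr_def)
  show "a - b = a + - b" by (simp add: plus_rr_def minus_rr_def uminus_rr_def)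
  show "(0::('a,'b) rr) \<noteq> 1" 
    by (auto simp: zero_rr_def one_rr_def ga_one_def fun_eq_iff)
qed
end

lemma un_sum: "un (sum f S) g = (\<Sum>s\<in>S. un (f s) g)"
  by (induction S rule: infinite_finite_induct) (auto simp: zero_rr_def plus_rr_def)

lemma sum_split_mult: fixes f :: "nat \<Rightarrow> 'a::comm_monoid_add" shows "(\<Sum>t<c*N. f t) = (\<Sum>j<c. \<Sum>b<N. f (j*N+b))"
proof -
  have "(\<Sum>t<c*N. f t) = (\<Sum>j<c. sum f {j*N..<j*N+N})" using sum.nat_group[of f N c] by simp
  also have "\<dots> = (\<Sum>j<c. \<Sum>b<N. f (j*N+b))"
  proof (rule sum.cong[OF refl])
    fix j
    show "sum f {j*N..<j*N+N} = (\<Sum>b<N. f (j*N+b))"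
      using sum.shift_bounds_nat_ivl[of f 0 "j*N" N] by (simp add: atLeast0LessThan add.commute)
  qed
  finally show ?thesis .
qed

lemma sum_split_mult': fixes f :: "nat \<Rightarrow> 'a::comm_monoid_add" shows "(\<Sum>t\<in>{0..<c*N}. f t) = (\<Sum>j<c. \<Sum>b<N. f (j*N+b))"
  using sum_split_mult by (simp add: atLeast0LessThan)

lemma grp_enum_props: "distinct (grp_enum::'n::finite list)" "set (grp_enum::'n list) = UNIV"
  "length (grp_enum::'n list) = CARD('n)"
proof -
  have ex: "\<exists>xs::'n list. distinct xs \<and> set xs = UNIV"
    using finite_distinct_list[of "UNIV::'n set"] by auto
  have "distinct (grp_enum::'n list) \<and> set (grp_enum::'n list) = UNIV"
    unfolding grp_enum_def by (rule someI_ex[OF ex])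
  then show "distinct (grp_enum::'n::finite list)" "set (grp_enum::'n list) = UNIV" by auto
  then show "length (grp_enum::'n list) = CARD('n)" by (metis distinct_card)
qed

lemma card_pos: "CARD('n::finite) > 0" by simp

definition idx :: "'n::finite \<Rightarrow> nat" where
  "idx g = (THE p. p < CARD('n) \<and> grp_enum ! p = g)"

lemma idx_props: "idx (g::'n::finite) < CARD('n) \<and> grp_enum ! idx g = g"
proof -
  have len: "length (grp_enum::'n list) = CARD('n)" by (rule grp_enum_props(3))
  have dis: "distinct (grp_enum::'n list)" by (rule grp_enum_props(1))
  have "\<exists>!p. p < CARD('n) \<and> (grp_enum::'n list) ! p = g"
  proof -
    have "g \<in> set (grp_enum::'n list)" using grp_enum_props by auto
    then obtain p where "p < length (grp_enum::'n list)" "grp_enum ! p = g" by (metis in_set_conv_nth)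
    moreover have "\<And>q. q < CARD('n) \<Longrightarrow> (grp_enum::'n list) ! q = g \<Longrightarrow> q = p"
      using calculation len dis by (metis nth_eq_iff_index_eq)
    ultimately show ?thesis using len by auto
  qed
  then show ?thesis unfolding idx_def by (rule theI')
qed

lemma idx_nth: "p < CARD('n) \<Longrightarrow> idx ((grp_enum::'n::finite list) ! p) = p"
  using idx_props[of "(grp_enum::'n list) ! p"] grp_enum_props
  by (metis nth_eq_iff_index_eq)

lemma sum_enum: "(\<Sum>b<CARD('n). f ((grp_enum::'n::finite list) ! b)) = (\<Sum>h\<in>UNIV. f h)"
proof -
  have "bij_betw ((!) (grp_enum::'n list)) {..<CARD('n)} UNIV"
    by (rule bij_betw_nth) (auto simp: grp_enum_props)
  then show ?thesis by (rule sum.reindex_bij_betw)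
qed

definition vecF :: "('f::field,'n::{finite,ab_group_add}) rr vec \<Rightarrow> 'f vec" where
  "vecF y = vec (dim_vec y * CARD('n)) (\<lambda>i. un (y $ (i div CARD('n))) (grp_enum ! (i mod CARD('n))))"

definition vecR :: "nat \<Rightarrow> 'f vec \<Rightarrow> ('f::field,'n::{finite,ab_group_add}) rr vec" where
  "vecR k v = vec k (\<lambda>j. RR (\<lambda>g. v $ (j * CARD('n) + idx g)))"

lemma dim_vecF[simp]: "dim_vec (vecF (y::('f::field,'n::{finite,ab_group_add}) rr vec)) = dim_vec y * CARD('n)"
  by (simp only: vecF_def dim_vec)

lemma vecF_carrier: "y \<in> carrier_vec k \<Longrightarrow> vecF (y::('f::field,'n::{finite,ab_group_add}) rr vec) \<in> carrier_vec (k * CARD('n))"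
  by (simp only: carrier_vec_def mem_Collect_eq dim_vecF)

lemma lt_mult_bound: "i < r \<Longrightarrow> j < c \<Longrightarrow> i * c + j < r * (c::nat)"
proof -
  assume "i < r" "j < c"
  then have "i * c + j < i * c + c" by simp
  also have "\<dots> = Suc i * c" by simp
  also have "\<dots> \<le> r * c" using \<open>i < r\<close> by (intro mult_le_mono1) simp
  finally show ?thesis .
qed

lemma vecF_vecR: assumes "v \<in> carrier_vec (k * CARD('n::{finite,ab_group_add}))"
  shows "vecF (vecR k v :: ('f::field,'n) rr vec) = v"
proof (rule eq_vecI)
  show "dim_vec (vecF (vecR k v :: ('f,'n) rr vec)) = dim_vec v" using assms by (simp add: vecR_def)
  fix i assume "i < dim_vec v"
  then have i: "i < k * CARD('n)" using assms by simp
  then have d: "i div CARD('n) < k" by (simp add: less_mult_imp_div_less)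
  have m: "i mod CARD('n) < CARD('n)" by simp
  have "vecF (vecR k v :: ('f,'n) rr vec) $ i = un ((vecR k v :: ('f,'n) rr vec) $ (i div CARD('n))) (grp_enum ! (i mod CARD('n)))"
    using i by (simp add: vecF_def vecR_def)
  also have "\<dots> = v $ (i div CARD('n) * CARD('n) + idx ((grp_enum::'n list) ! (i mod CARD('n))))"
    using d by (simp add: vecR_def)
  also have "idx ((grp_enum::'n list) ! (i mod CARD('n))) = i mod CARD('n)" using m by (rule idx_nth)
  also have "i div CARD('n) * CARD('n) + i mod CARD('n) = i" by simp
  finally show "vecF (vecR k v :: ('f,'n) rr vec) $ i = v $ i" .
qed

lemma vecR_carrier: "vecR k v \<in> carrier_vec k" by (simp add: vecR_def)

lemma vecF_inj: assumes "y \<in> carrier_vec k" "z \<in> carrier_vec k"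
  and eq: "vecF (y::('f::field,'n::{finite,ab_group_add}) rr vec) = vecF z"
  shows "y = z"
proof (rule eq_vecI)
  show "dim_vec y = dim_vec z" using assms by simp
  fix j assume "j < dim_vec z"
  then have j: "j < k" using assms by simp
  show "y $ j = z $ j"
  proof (rule rr.expand, rule ext)
    fix g :: 'n
    have ig: "idx g < CARD('n)" using idx_props[of g] by simp
    have eg: "grp_enum ! idx g = g" using idx_props[of g] by simp
    have lt: "j * CARD('n) + idx g < k * CARD('n)" using lt_mult_bound[OF j ig] .
    have dv: "(j * CARD('n) + idx g) div CARD('n) = j" "(j * CARD('n) + idx g) mod CARD('n) = idx g"
      using ig by auto
    have "\<And>w::('f,'n) rr vec. w \<in> carrier_vec k \<Longrightarrow> vecF w $ (j * CARD('n) + idx g) = un (w $ j) g"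
    proof -
      fix w :: "('f,'n) rr vec" assume "w \<in> carrier_vec k"
      then have "vecF w $ (j * CARD('n) + idx g) = un (w $ ((j * CARD('n) + idx g) div CARD('n))) (grp_enum ! ((j * CARD('n) + idx g) mod CARD('n)))"
        using lt unfolding vecF_def by simp
      then show "vecF w $ (j * CARD('n) + idx g) = un (w $ j) g" unfolding dv eg .
    qed
    then show "un (y $ j) g = un (z $ j) g" using assms by metis
  qed
qed

lemma L_N_entry: "a < CARD('n) \<Longrightarrow> b < CARD('n) \<Longrightarrow>
  L_N (x::('f::field,'n::{finite,ab_group_add}) grpalg) $$ (a,b) = x (grp_enum ! a - grp_enum ! b)"
proof -
  assume ab: "a < CARD('n)" "b < CARD('n)"
  have "L_N x $$ (a,b) = (\<Sum>g\<in>UNIV. if g = grp_enum ! a - grp_enum ! b then x g else 0)"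
    unfolding L_N_def using ab by (auto intro!: sum.cong simp: algebra_simps)
  also have "\<dots> = x (grp_enum ! a - grp_enum ! b)" by (simp add: sum.delta')
  finally show ?thesis .
qed

lemma lift_mult_vecF:
  assumes X: "X \<in> carrier_mat r c" and y: "y \<in> carrier_vec c"
  shows "lift_mat X *\<^sub>v vecF y = vecF (map_mat RR X *\<^sub>v (y::('f::field,'n::{finite,ab_group_add}) rr vec))"
proof (rule eq_vecI)
  let ?N = "CARD('n)"
  show "dim_vec (lift_mat X *\<^sub>v vecF y) = dim_vec (vecF (map_mat RR X *\<^sub>v y))"
    using X by (simp add: lift_mat_def)
  fix i assume "i < dim_vec (vecF (map_mat RR X *\<^sub>v y))"
  then have i: "i < r * ?N" using X by simp
  define a where "a = i mod ?N"
  define i' where "i' = i div ?N"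
  have a: "a < ?N" unfolding a_def by simp
  have i': "i' < r" unfolding i'_def using i by (simp add: less_mult_imp_div_less)
  have "(lift_mat X *\<^sub>v vecF y) $ i = (\<Sum>t\<in>{0..<c * ?N}. lift_mat X $$ (i, t) * vecF y $ t)"
    using X y i by (simp add: lift_mat_def scalar_prod_def)
  also have "\<dots> = (\<Sum>j<c. \<Sum>b<?N. lift_mat X $$ (i, j*?N+b) * vecF y $ (j*?N+b))"
    by (rule sum_split_mult')
  also have "\<dots> = (\<Sum>j<c. \<Sum>b<?N. (X $$ (i', j)) (grp_enum ! a - grp_enum ! b) * un (y $ j) (grp_enum ! b))"
  proof (intro sum.cong refl)
    fix j b assume j: "j \<in> {..<c}" and b: "b \<in> {..<?N}"
    have lt: "j * ?N + b < c * ?N" using j b by (intro lt_mult_bound) auto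
    have dv: "(j * ?N + b) div ?N = j" "(j * ?N + b) mod ?N = b" using b by auto
    show "lift_mat X $$ (i, j*?N+b) * vecF y $ (j*?N+b) = (X $$ (i', j)) (grp_enum ! a - grp_enum ! b) * un (y $ j) (grp_enum ! b)"
    proof -
      have e1: "lift_mat X $$ (i, j*?N+b) = L_N (X $$ (i', j)) $$ (a, b)"
        using X i lt dv unfolding lift_mat_def a_def i'_def by simp
      have e2: "vecF y $ (j*?N+b) = un (y$j) (grp_enum!b)" using y lt dv by (simp add: vecF_def)
      show ?thesis unfolding e1 e2 using a b by (simp add: L_N_entry)
    qed
  qed
  also have "\<dots> = (\<Sum>j<c. ga_mult (X $$ (i', j)) (un (y $ j)) (grp_enum ! a))"
  proof (rule sum.cong[OF refl])
    fix j
    have "(\<Sum>b<?N. (X $$ (i', j)) (grp_enum ! a - grp_enum ! b) * un (y $ j) (grp_enum ! b))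
       = (\<Sum>h\<in>UNIV. (X $$ (i', j)) (grp_enum ! a - h) * un (y $ j) h)"
      by (rule sum_enum[where f="\<lambda>h. (X $$ (i', j)) (grp_enum ! a - h) * un (y $ j) h"])
    also have "\<dots> = ga_mult (un (y $ j)) (X $$ (i', j)) (grp_enum ! a)"
      unfolding ga_mult_def by (simp add: mult.commute)
    finally show "(\<Sum>b<?N. (X $$ (i', j)) (grp_enum ! a - grp_enum ! b) * un (y $ j) (grp_enum ! b))
       = ga_mult (X $$ (i', j)) (un (y $ j)) (grp_enum ! a)" by (simp add: ga_mult_comm)
  qed
  also have "\<dots> = un ((map_mat RR X *\<^sub>v y) $ i') (grp_enum ! a)"
    using X y i' by (simp add: scalar_prod_def un_sum times_rr_def atLeast0LessThan)
  also have "\<dots> = vecF (map_mat RR X *\<^sub>v y) $ i"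
    using X i by (simp add: vecF_def a_def i'_def)
  finally show "(lift_mat X *\<^sub>v vecF y) $ i = vecF (map_mat RR X *\<^sub>v y) $ i" .
qed

definition kr :: "'a::comm_ring_1 mat \<Rightarrow> 'a mat \<Rightarrow> 'a mat" where
  "kr X Y = mat (dim_row X * dim_row Y) (dim_col X * dim_col Y)
     (\<lambda>(i,j). X $$ (i div dim_row Y, j div dim_col Y) * Y $$ (i mod dim_row Y, j mod dim_col Y))"

definition toM :: "nat \<Rightarrow> nat \<Rightarrow> 'a vec \<Rightarrow> 'a mat" where
  "toM r c v = mat r c (\<lambda>(i,j). v $ (i*c+j))"

definition fromM :: "'a mat \<Rightarrow> 'a vec" where
  "fromM W = vec (dim_row W * dim_col W) (\<lambda>k. W $$ (k div dim_col W, k mod dim_col W))"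

lemma kr_carrier[simp]: "X \<in> carrier_mat r1 c1 \<Longrightarrow> Y \<in> carrier_mat r2 c2 \<Longrightarrow> kr X Y \<in> carrier_mat (r1*r2) (c1*c2)"
  unfolding kr_def by auto

lemma toM_carrier[simp]: "toM r c v \<in> carrier_mat r c" unfolding toM_def by auto

lemma fromM_carrier[simp]: "W \<in> carrier_mat r c \<Longrightarrow> fromM W \<in> carrier_vec (r*c)"
  unfolding fromM_def by auto

lemma divmod_bound: "i < r * (c::nat) \<Longrightarrow> i div c < r \<and> i mod c < c"
  by (cases c) (auto simp: less_mult_imp_div_less)

lemma toM_fromM[simp]: "W \<in> carrier_mat r c \<Longrightarrow> toM r c (fromM W) = W"
  unfolding toM_def fromM_def by (rule eq_matI) (auto simp: lt_mult_bound)

lemma fromM_toM[simp]: "v \<in> carrier_vec (r*c) \<Longrightarrow> fromM (toM r c v) = v"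
  unfolding toM_def fromM_def
proof (rule eq_vecI)
  fix k assume v: "v \<in> carrier_vec (r*c)" and k: "k < dim_vec v"
  then have "k < r * c" by simp
  then have "c > 0" by (cases c) auto
  have "k div c < r" using \<open>k < r*c\<close> by (simp add: less_mult_imp_div_less)
  then show "vec (dim_row (mat r c (\<lambda>(i, j). v $ (i * c + j))) * dim_col (mat r c (\<lambda>(i, j). v $ (i * c + j))))
          (\<lambda>k. mat r c (\<lambda>(i, j). v $ (i * c + j)) $$ (k div dim_col (mat r c (\<lambda>(i, j). v $ (i * c + j))), k mod dim_col (mat r c (\<lambda>(i, j). v $ (i * c + j))))) $ k = v $ k"
    using \<open>k < r*c\<close> \<open>c > 0\<close> by simp
qed auto

lemma fromM_inj: "W \<in> carrier_mat r c \<Longrightarrow> V \<in> carrier_mat r c \<Longrightarrow> fromM W = fromM V \<Longrightarrow> W = V"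
  by (metis toM_fromM)

lemma fromM_add: "W \<in> carrier_mat r c \<Longrightarrow> V \<in> carrier_mat r c \<Longrightarrow> fromM (W + V) = fromM W + fromM V"
  unfolding fromM_def by (rule eq_vecI) (auto dest!: divmod_bound)

lemma fromM_uminus: "W \<in> carrier_mat r c \<Longrightarrow> fromM (- W) = - fromM W"
  unfolding fromM_def by (rule eq_vecI) (auto dest!: divmod_bound)

lemma fromM_zero: "fromM (0\<^sub>m r c :: 'a::zero mat) = 0\<^sub>v (r*c)"
  unfolding fromM_def by (rule eq_vecI) (auto dest!: divmod_bound)

lemma kr_mult_vec:
  assumes X: "X \<in> carrier_mat r1 c1" and Y: "Y \<in> carrier_mat r2 c2" and v: "v \<in> carrier_vec (c1*c2)"
  shows "kr X Y *\<^sub>v v = fromM (X * toM c1 c2 v * transpose_mat Y)"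
proof (rule eq_vecI)
  show "dim_vec (kr X Y *\<^sub>v v) = dim_vec (fromM (X * toM c1 c2 v * transpose_mat Y))"
    using X Y unfolding kr_def fromM_def by simp
  fix k assume "k < dim_vec (fromM (X * toM c1 c2 v * transpose_mat Y))"
  then have k: "k < r1 * r2" using X Y unfolding fromM_def by simp
  then have r2: "r2 > 0" by (cases r2) auto
  define i1 where "i1 = k div r2"
  define i2 where "i2 = k mod r2"
  have i1: "i1 < r1" unfolding i1_def using k by (simp add: less_mult_imp_div_less)
  have i2: "i2 < r2" unfolding i2_def using r2 by simp
  have "(kr X Y *\<^sub>v v) $ k = (\<Sum>t\<in>{0..<c1*c2}. X $$ (i1, t div c2) * Y $$ (i2, t mod c2) * v $ t)"
    using X Y v k unfolding kr_def i1_def i2_def by (simp add: scalar_prod_def)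
  also have "\<dots> = (\<Sum>k1<c1. \<Sum>k2<c2. X $$ (i1, (k1*c2+k2) div c2) * Y $$ (i2, (k1*c2+k2) mod c2) * v $ (k1*c2+k2))"
    by (rule sum_split_mult')
  also have "\<dots> = (\<Sum>k1<c1. \<Sum>k2<c2. X $$ (i1, k1) * Y $$ (i2, k2) * v $ (k1*c2+k2))"
    by (intro sum.cong refl) auto
  also have "\<dots> = (\<Sum>k2<c2. \<Sum>k1<c1. X $$ (i1, k1) * v $ (k1*c2+k2) * Y $$ (i2, k2))"
    by (subst sum.swap) (intro sum.cong refl, simp add: ac_simps)
  also have "\<dots> = (\<Sum>k2<c2. (\<Sum>k1<c1. X $$ (i1, k1) * v $ (k1*c2+k2)) * Y $$ (i2, k2))"
    by (simp add: sum_distrib_right)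
  also have "\<dots> = (X * toM c1 c2 v * transpose_mat Y) $$ (i1, i2)"
    using X Y i1 i2 by (simp add: scalar_prod_def toM_def atLeast0LessThan)
  also have "\<dots> = fromM (X * toM c1 c2 v * transpose_mat Y) $ k"
    using X Y k unfolding fromM_def i1_def i2_def by simp
  finally show "(kr X Y *\<^sub>v v) $ k = fromM (X * toM c1 c2 v * transpose_mat Y) $ k" .
qed

lemma hcat_mult_vec:
  assumes X: "X \<in> carrier_mat r c1" and Y: "Y \<in> carrier_mat r c2" and x: "x \<in> carrier_vec (c1+c2)"
  shows "hcat X Y *\<^sub>v x = X *\<^sub>v vec_first x c1 + Y *\<^sub>v vec_last x c2"
proof -
  have rw: "row (hcat X Y) i = row X i @\<^sub>v row Y i" if "i < r" for i
    using X Y that unfolding hcat_def by (intro eq_vecI) auto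
  show ?thesis
  proof (rule eq_vecI)
    fix i assume "i < dim_vec (X *\<^sub>v vec_first x c1 + Y *\<^sub>v vec_last x c2)"
    then have i: "i < r" using X Y by simp
    have "(hcat X Y *\<^sub>v x) $ i = (row X i @\<^sub>v row Y i) \<bullet> (vec_first x c1 @\<^sub>v vec_last x c2)"
      using X Y x i rw by (simp add: hcat_def)
    also have "\<dots> = row X i \<bullet> vec_first x c1 + row Y i \<bullet> vec_last x c2"
      by (rule scalar_prod_append[of _ c1 _ c2]) (use X Y i in auto)
    finally show "(hcat X Y *\<^sub>v x) $ i = (X *\<^sub>v vec_first x c1 + Y *\<^sub>v vec_last x c2) $ i"
      using X Y i by simp
  qed (use X Y in \<open>simp add: hcat_def\<close>)
qed

lemma vcat_mult_vec:
  assumes X: "X \<in> carrier_mat r1 c" and Y: "Y \<in> carrier_mat r2 c" and w: "w \<in> carrier_vec c"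
  shows "vcat X Y *\<^sub>v w = (X *\<^sub>v w) @\<^sub>v (Y *\<^sub>v w)"
proof (rule eq_vecI)
  fix i assume "i < dim_vec ((X *\<^sub>v w) @\<^sub>v (Y *\<^sub>v w))"
  then have i: "i < r1 + r2" using X Y by simp
  have rw: "row (vcat X Y) i = (if i < r1 then row X i else row Y (i - r1))"
    using X Y i unfolding vcat_def by (intro eq_vecI) auto
  show "(vcat X Y *\<^sub>v w) $ i = ((X *\<^sub>v w) @\<^sub>v (Y *\<^sub>v w)) $ i"
    using X Y i rw by (simp add: vcat_def)
qed (use X Y in \<open>simp add: vcat_def\<close>)

lemma dim_toM[simp]: "dim_row (toM r c v) = r" "dim_col (toM r c v) = c" unfolding toM_def by auto
lemma dim_kr[simp]: "dim_row (kr X Y) = dim_row X * dim_row Y" "dim_col (kr X Y) = dim_col X * dim_col Y"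
  unfolding kr_def by auto

lemma vec_first_append: "v \<in> carrier_vec n \<Longrightarrow> vec_first (v @\<^sub>v w) n = v"
  unfolding vec_first_def by (rule eq_vecI) auto

lemma vec_last_append: "v \<in> carrier_vec n \<Longrightarrow> w \<in> carrier_vec m \<Longrightarrow> vec_last (v @\<^sub>v w) m = w"
  unfolding vec_last_def by (rule eq_vecI) auto

lemma add_eq_zero_mat: assumes "A \<in> carrier_mat r c" "B \<in> carrier_mat r c" "A + B = 0\<^sub>m r c"
  shows "B = - (A :: 'a::ab_group_add mat)"
proof (rule eq_matI)
  fix i j assume ij: "i < dim_row (- A)" "j < dim_col (- A)"
  have "(A + B) $$ (i,j) = (0\<^sub>m r c :: 'a mat) $$ (i,j)" by (simp only: assms(3))
  moreover have "dim_row B = r" "dim_col B = c" "dim_row A = r" "dim_col A = c" using assms by auto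
  ultimately have "A $$ (i,j) + B $$ (i,j) = 0" using ij by simp
  then show "B $$ (i,j) = (- A) $$ (i,j)" using assms ij by (simp add: eq_neg_iff_add_eq_0 add.commute)
qed (use assms in auto)

lemma vec_eq_of_diff: assumes "u \<in> carrier_vec n" "v \<in> carrier_vec n" "u - v = 0\<^sub>v n"
  shows "u = (v :: 'a::ab_group_add vec)"
proof (rule eq_vecI)
  fix i assume "i < dim_vec v"
  have "(u - v) $ i = (0\<^sub>v n :: 'a vec) $ i" by (simp only: assms(3))
  moreover have "dim_vec u = n" "dim_vec v = n" using assms by auto
  ultimately have "u $ i - v $ i = 0" using \<open>i < dim_vec v\<close> by simp
  then show "u $ i = v $ i" using assms \<open>i < dim_vec v\<close> by simp
qed (use assms in auto)

lemma inj_mat_mult: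
  fixes Am :: "'a::comm_ring_1 mat"
  assumes Am: "Am \<in> carrier_mat p a" and Z1: "Z1 \<in> carrier_mat a c" and Z2: "Z2 \<in> carrier_mat a c"
    and injA: "\<And>y. y \<in> carrier_vec a \<Longrightarrow> Am *\<^sub>v y = 0\<^sub>v p \<Longrightarrow> y = 0\<^sub>v a"
    and eq: "Am * Z1 = Am * Z2"
  shows "Z1 = Z2"
proof (rule eq_matI)
  fix i j assume i: "i < dim_row Z2" and j: "j < dim_col Z2"
  have c1: "col (Am * Z1) j = Am *\<^sub>v col Z1 j" using Am Z1 Z2 j by (simp add: mult_mat_vec_def)
  have c2: "col (Am * Z2) j = Am *\<^sub>v col Z2 j" using Am Z2 j by (simp add: mult_mat_vec_def)
  have cc: "col Z1 j \<in> carrier_vec a" "col Z2 j \<in> carrier_vec a" using Z1 Z2 by auto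
  have "Am *\<^sub>v (col Z1 j - col Z2 j) = Am *\<^sub>v col Z1 j - Am *\<^sub>v col Z2 j"
    using Am cc by (simp add: mult_minus_distrib_mat_vec)
  also have "\<dots> = 0\<^sub>v p" using eq c1 c2 Am by (metis minus_cancel_vec mult_mat_vec_carrier cc(2))
  finally have "col Z1 j - col Z2 j = 0\<^sub>v a" using injA cc by (metis minus_carrier_vec)
  then have "col Z1 j = col Z2 j" using cc vec_eq_of_diff by blast
  then show "Z1 $$ (i, j) = Z2 $$ (i, j)" using i j Z1 Z2
    by (metis carrier_matD(1) carrier_matD(2) col_def index_vec)
qed (use Z1 Z2 in auto)

context
  fixes Am Bm Q :: "'a::comm_ring_1 mat" and a b p q :: nat
  assumes Am: "Am \<in> carrier_mat p a" and Bm: "Bm \<in> carrier_mat q b" and Q: "Q \<in> carrier_mat b q"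
    and QB: "Q * Bm = 1\<^sub>m b"
    and injA: "\<And>y. y \<in> carrier_vec a \<Longrightarrow> Am *\<^sub>v y = 0\<^sub>v p \<Longrightarrow> y = 0\<^sub>v a"
begin

definition "EE = hcat (kr Am (1\<^sub>m q)) (kr (1\<^sub>m p) Bm)"
definition "DD = vcat (kr (1\<^sub>m a) Bm) (- kr Am (1\<^sub>m b))"

lemma EE_carrier: "EE \<in> carrier_mat (p*q) (a*q + p*b)"
  unfolding EE_def hcat_def using Am Bm by auto

lemma DD_carrier: "DD \<in> carrier_mat (a*q + p*b) (a*b)"
  unfolding DD_def vcat_def using Am Bm by auto

lemma DD_mult: assumes w: "w \<in> carrier_vec (a*b)"
  shows "DD *\<^sub>v w = fromM (toM a b w * transpose_mat Bm) @\<^sub>v (- fromM (Am * toM a b w))"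
proof -
  have k1: "kr (1\<^sub>m a) Bm \<in> carrier_mat (a*q) (a*b)" using Bm by simp
  have k2: "- kr Am (1\<^sub>m b) \<in> carrier_mat (p*b) (a*b)" using Am by simp
  have "DD *\<^sub>v w = (kr (1\<^sub>m a) Bm *\<^sub>v w) @\<^sub>v ((- kr Am (1\<^sub>m b)) *\<^sub>v w)"
    unfolding DD_def by (rule vcat_mult_vec[OF k1 k2 w])
  also have "kr (1\<^sub>m a) Bm *\<^sub>v w = fromM (toM a b w * transpose_mat Bm)"
    using kr_mult_vec[OF one_carrier_mat Bm w] by simp
  also have "(- kr Am (1\<^sub>m b)) *\<^sub>v w = - (kr Am (1\<^sub>m b) *\<^sub>v w)"
    using Am w by (subst uminus_mult_mat_vec) auto
  also have "kr Am (1\<^sub>m b) *\<^sub>v w = fromM (Am * toM a b w)"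
    using kr_mult_vec[OF Am one_carrier_mat w] Am by simp
  finally show ?thesis .
qed

lemma EE_mult: assumes x: "x \<in> carrier_vec (a*q + p*b)"
  shows "EE *\<^sub>v x = fromM (Am * toM a q (vec_first x (a*q)) + toM p b (vec_last x (p*b)) * transpose_mat Bm)"
proof -
  have k1: "kr Am (1\<^sub>m q) \<in> carrier_mat (p*q) (a*q)" using Am by simp
  have k2: "kr (1\<^sub>m p) Bm \<in> carrier_mat (p*q) (p*b)" using Bm by simp
  have "EE *\<^sub>v x = kr Am (1\<^sub>m q) *\<^sub>v vec_first x (a*q) + kr (1\<^sub>m p) Bm *\<^sub>v vec_last x (p*b)"
    unfolding EE_def by (rule hcat_mult_vec[OF k1 k2 x])
  also have "kr Am (1\<^sub>m q) *\<^sub>v vec_first x (a*q) = fromM (Am * toM a q (vec_first x (a*q)))"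
    using kr_mult_vec[OF Am one_carrier_mat vec_first_carrier] Am by simp
  also have "kr (1\<^sub>m p) Bm *\<^sub>v vec_last x (p*b) = fromM (toM p b (vec_last x (p*b)) * transpose_mat Bm)"
    using kr_mult_vec[OF one_carrier_mat Bm vec_last_carrier] by simp
  also have "fromM (Am * toM a q (vec_first x (a*q))) + fromM (toM p b (vec_last x (p*b)) * transpose_mat Bm)
     = fromM (Am * toM a q (vec_first x (a*q)) + toM p b (vec_last x (p*b)) * transpose_mat Bm)"
    by (rule fromM_add[symmetric]) (use Am Bm in auto)
  finally show ?thesis .
qed

lemma chain_inj: assumes w: "w \<in> carrier_vec (a*b)" and z: "DD *\<^sub>v w = 0\<^sub>v (a*q + p*b)"
  shows "w = 0\<^sub>v (a*b)"
proof -
  define W where "W = toM a b w"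
  have W: "W \<in> carrier_mat a b" unfolding W_def by simp
  have c1: "fromM (W * transpose_mat Bm) \<in> carrier_vec (a*q)" using W Bm by simp
  have "fromM (W * transpose_mat Bm) = vec_first (DD *\<^sub>v w) (a*q)"
    using DD_mult[OF w] c1 unfolding W_def by (simp add: vec_first_append)
  also have "\<dots> = 0\<^sub>v (a*q)" unfolding z vec_first_def by (rule eq_vecI) auto
  also have "\<dots> = fromM (0\<^sub>m a q)" by (simp add: fromM_zero)
  finally have WB: "W * transpose_mat Bm = 0\<^sub>m a q"
    using fromM_inj[of "W * transpose_mat Bm" a q "0\<^sub>m a q"] W Bm by auto
  have "W = W * transpose_mat (Q * Bm)" using W QB by simp
  also have "\<dots> = W * (transpose_mat Bm * transpose_mat Q)" using transpose_mult[OF Q Bm] by simp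
  also have "\<dots> = (W * transpose_mat Bm) * transpose_mat Q" using W Bm Q by simp
  also have "\<dots> = 0\<^sub>m a b" unfolding WB using Q by simp
  finally have "W = 0\<^sub>m a b" .
  then show ?thesis using w unfolding W_def by (metis fromM_toM fromM_zero)
qed

lemma chain_comp: assumes w: "w \<in> carrier_vec (a*b)"
  shows "EE *\<^sub>v (DD *\<^sub>v w) = 0\<^sub>v (p*q)"
proof -
  define W where "W = toM a b w"
  have W: "W \<in> carrier_mat a b" unfolding W_def by simp
  have c1: "fromM (W * transpose_mat Bm) \<in> carrier_vec (a*q)" using W Bm by simp
  have c2: "- fromM (Am * W) \<in> carrier_vec (p*b)" using W Am by simp
  have Dw: "DD *\<^sub>v w = fromM (W * transpose_mat Bm) @\<^sub>v (- fromM (Am * W))"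
    using DD_mult[OF w] unfolding W_def .
  have x: "DD *\<^sub>v w \<in> carrier_vec (a*q + p*b)" using Dw c1 c2 by simp
  have f: "vec_first (DD *\<^sub>v w) (a*q) = fromM (W * transpose_mat Bm)" using Dw c1 by (simp add: vec_first_append)
  have l: "vec_last (DD *\<^sub>v w) (p*b) = - fromM (Am * W)" using Dw c1 c2 by (simp add: vec_last_append)
  have tl: "toM p b (- fromM (Am * W)) = - (Am * W)"
    using fromM_uminus[of "Am * W" p b] Am W by (metis mult_carrier_mat toM_fromM uminus_carrier_mat)
  have tf: "toM a q (fromM (W * transpose_mat Bm)) = W * transpose_mat Bm" using W Bm by simp
  define X where "X = Am * (W * transpose_mat Bm)"
  have X: "X \<in> carrier_mat p q" unfolding X_def using Am W Bm by simp
  have "(- (Am * W)) * transpose_mat Bm = - ((Am * W) * transpose_mat Bm)"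
    using Am W Bm by (intro uminus_mult_left_mat) simp
  also have "(Am * W) * transpose_mat Bm = X" unfolding X_def using Am W Bm by simp
  finally have e2: "(- (Am * W)) * transpose_mat Bm = - X" .
  have "EE *\<^sub>v (DD *\<^sub>v w) = fromM (X + - X)"
    unfolding EE_mult[OF x] f l tl tf e2 X_def ..
  also have "X + - X = 0\<^sub>m p q" using X by (simp add: add_uminus_minus_mat)
  finally show ?thesis by (simp add: fromM_zero)
qed

lemma chain_exact: assumes x: "x \<in> carrier_vec (a*q + p*b)" and z: "EE *\<^sub>v x = 0\<^sub>v (p*q)"
  shows "\<exists>w \<in> carrier_vec (a*b). x = DD *\<^sub>v w"
proof -
  define U where "U = toM a q (vec_first x (a*q))"
  define V where "V = toM p b (vec_last x (p*b))"
  have U: "U \<in> carrier_mat a q" unfolding U_def by simp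
  have V: "V \<in> carrier_mat p b" unfolding V_def by simp
  have "fromM (Am * U + V * transpose_mat Bm) = fromM (0\<^sub>m p q)"
    using EE_mult[OF x] z unfolding U_def V_def by (simp add: fromM_zero)
  then have eq: "Am * U + V * transpose_mat Bm = 0\<^sub>m p q"
    using fromM_inj[of "Am * U + V * transpose_mat Bm" p q "0\<^sub>m p q"] Am U V Bm by auto
  then have VB: "V * transpose_mat Bm = - (Am * U)"
    by (rule add_eq_zero_mat[rotated 2]) (use Am U V Bm in auto)
  define W where "W = U * transpose_mat Q"
  have W: "W \<in> carrier_mat a b" unfolding W_def using U Q by simp
  have "V = V * transpose_mat (Q * Bm)" using V QB by simp
  also have "\<dots> = V * (transpose_mat Bm * transpose_mat Q)" using transpose_mult[OF Q Bm] by simp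
  also have "\<dots> = (V * transpose_mat Bm) * transpose_mat Q" using V Bm Q by simp
  also have "\<dots> = - (Am * U * transpose_mat Q)" unfolding VB
    using Am U Q by (intro uminus_mult_left_mat) simp
  also have "Am * U * transpose_mat Q = Am * W" unfolding W_def using Am U Q by simp
  finally have VV: "V = - (Am * W)" .
  have "Am * (W * transpose_mat Bm) = (Am * W) * transpose_mat Bm" using Am W Bm by simp
  also have "Am * W = - V" using VV by simp
  also have "(- V) * transpose_mat Bm = - (V * transpose_mat Bm)"
    using V Bm by (intro uminus_mult_left_mat) simp
  also have "\<dots> = Am * U" unfolding VB by simp
  finally have AU: "Am * U = Am * (W * transpose_mat Bm)" ..
  have UU: "U = W * transpose_mat Bm"
  proof (rule inj_mat_mult[OF Am U _ injA])
    show "W * transpose_mat Bm \<in> carrier_mat a q" using W Bm by simp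
    show "Am * U = Am * (W * transpose_mat Bm)" by (rule AU)
  qed
  define w where "w = fromM W"
  have w: "w \<in> carrier_vec (a*b)" unfolding w_def using W by simp
  have Ww: "toM a b w = W" unfolding w_def using W by simp
  have "DD *\<^sub>v w = fromM U @\<^sub>v fromM V"
    unfolding DD_mult[OF w] Ww UU VV using fromM_uminus[of "Am * W" p b] Am W by simp
  also have "\<dots> = vec_first x (a*q) @\<^sub>v vec_last x (p*b)" unfolding U_def V_def by simp
  also have "\<dots> = x" using x by simp
  finally show ?thesis using w by auto
qed

end

lemma mat_linear_map: fixes M :: "'a::field mat" assumes M: "M \<in> carrier_mat m n"
  shows "linear_map class_ring (module_vec TYPE('a) n) (module_vec TYPE('a) m) (\<lambda>v. M *\<^sub>v v)"
proof (auto simp add: linear_map_def)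
  show "vectorspace class_ring (module_vec TYPE('a) n)" by (rule vec_vs)
  show "vectorspace class_ring (module_vec TYPE('a) m)" by (rule vec_vs)
  show "mod_hom class_ring (module_vec TYPE('a) n) (module_vec TYPE('a) m) (\<lambda>v. M *\<^sub>v v)"
  proof (rule mod_hom.intro, unfold mod_hom_axioms_def)
    show "module class_ring (module_vec TYPE('a) n)" by (rule vec_module)
    show "module class_ring (module_vec TYPE('a) m)" by (rule vec_module)
    show "(\<lambda>v. M *\<^sub>v v) \<in> LinearCombinations.module_hom class_ring (module_vec TYPE('a) n) (module_vec TYPE('a) m)"
      unfolding LinearCombinations.module_hom_def using M
      by (auto simp: module_vec_simps mult_add_distrib_mat_vec mult_mat_vec)
  qed
qed

lemma ker_eq: fixes M :: "'a::field mat" assumes M: "M \<in> carrier_mat m n"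
  shows "mod_hom.ker (module_vec TYPE('a) n) (module_vec TYPE('a) m) (\<lambda>v. M *\<^sub>v v) = mat_kernel M"
proof -
  have "mod_hom class_ring (module_vec TYPE('a) n) (module_vec TYPE('a) m) (\<lambda>v. M *\<^sub>v v)"
    using mat_linear_map[OF M] by (simp add: linear_map_def)
  then show ?thesis using M by (simp add: mod_hom.ker_def mat_kernel_def module_vec_simps)
qed

lemma im_eq: fixes M :: "'a::field mat" assumes M: "M \<in> carrier_mat m n"
  shows "mod_hom.im (module_vec TYPE('a) n) (\<lambda>v. M *\<^sub>v v) = LinearCombinations.module.span class_ring (module_vec TYPE('a) m) (set (cols M))"
proof -
  have "mod_hom class_ring (module_vec TYPE('a) n) (module_vec TYPE('a) m) (\<lambda>v. M *\<^sub>v v)"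
    using mat_linear_map[OF M] by (simp add: linear_map_def)
  then have "mod_hom.im (module_vec TYPE('a) n) (\<lambda>v. M *\<^sub>v v) = (\<lambda>v. M *\<^sub>v v) ` carrier_vec n"
    by (simp add: mod_hom.im_def module_vec_simps)
  also have "\<dots> = vec_space.col_space m M"
    unfolding vec_space.col_space_eq[OF M] using M by auto
  finally show ?thesis unfolding vec_space.col_space_def .
qed

lemma rank_nullity_mat: fixes M :: "'a::field mat" assumes M: "M \<in> carrier_mat m n"
  shows "vec_space.rank m M + vectorspace.dim class_ring ((module_vec TYPE('a) n)\<lparr>carrier := mat_kernel M\<rparr>) = n"
proof -
  have fd: "vectorspace.fin_dim class_ring (module_vec TYPE('a) n)"
    using vec_space.fin_dim by blast
  have "vectorspace.dim class_ring ((module_vec TYPE('a) m)\<lparr>carrier := mod_hom.im (module_vec TYPE('a) n) (\<lambda>v. M *\<^sub>v v)\<rparr>) +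
   vectorspace.dim class_ring ((module_vec TYPE('a) n)\<lparr>carrier := mod_hom.ker (module_vec TYPE('a) n) (module_vec TYPE('a) m) (\<lambda>v. M *\<^sub>v v)\<rparr>) =
   vectorspace.dim class_ring (module_vec TYPE('a) n)"
    by (rule linear_map.rank_nullity[OF mat_linear_map[OF M] fd])
  then show ?thesis unfolding im_eq[OF M] ker_eq[OF M] vec_space.dim_is_n vec_space.rank_def .
qed

lemma rank_inj: fixes M :: "'a::field mat" assumes M: "M \<in> carrier_mat m n"
  and k: "mat_kernel M = {0\<^sub>v n}"
  shows "vec_space.rank m M = n"
proof -
  have inj: "inj_on (\<lambda>v. M *\<^sub>v v) (carrier (module_vec TYPE('a) n))"
  proof (rule inj_onI)
    fix x y assume x: "x \<in> carrier (module_vec TYPE('a) n)" and y: "y \<in> carrier (module_vec TYPE('a) n)"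
      and e: "M *\<^sub>v x = M *\<^sub>v y"
    have x': "x \<in> carrier_vec n" and y': "y \<in> carrier_vec n" using x y by (auto simp: module_vec_simps)
    have "M *\<^sub>v (x - y) = M *\<^sub>v x - M *\<^sub>v y" using M x' y' by (simp add: mult_minus_distrib_mat_vec)
    also have "\<dots> = 0\<^sub>v m" using e M y' by simp
    finally have "x - y \<in> mat_kernel M" using M x' y' by (intro mat_kernelI) auto
    then have "x - y = 0\<^sub>v n" using k by auto
    then show "x = y" using x' y' by (rule vec_eq_of_diff[rotated 2])
  qed
  have "vectorspace.dim class_ring ((module_vec TYPE('a) n)\<lparr>carrier := mod_hom.ker (module_vec TYPE('a) n) (module_vec TYPE('a) m) (\<lambda>v. M *\<^sub>v v)\<rparr>) = 0"
    by (rule linear_map.inj_imp_dim_ker0[OF mat_linear_map[OF M] inj])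
  then show ?thesis using rank_nullity_mat[OF M] unfolding ker_eq[OF M] by simp
qed

lemma rank_surj: fixes M :: "'a::field mat" assumes M: "M \<in> carrier_mat m n"
  and s: "\<And>y. y \<in> carrier_vec m \<Longrightarrow> \<exists>x\<in>carrier_vec n. M *\<^sub>v x = y"
  shows "vec_space.rank m M = m"
proof -
  have "vec_space.col_space m M = carrier_vec m"
    unfolding vec_space.col_space_eq[OF M] using M s by auto
  then have "LinearCombinations.module.span class_ring (module_vec TYPE('a) m) (set (cols M)) = carrier_vec m"
    unfolding vec_space.col_space_def .
  then show ?thesis unfolding vec_space.rank_def
    by (simp add: module_vec_def vec_space.dim_is_n[unfolded module_vec_def])
qed

lemma kernel_dim_rank: fixes E D :: "'a::field mat"
  assumes D: "D \<in> carrier_mat n k" and eq: "mat_kernel E = {y. \<exists>x\<in>carrier_vec k. D *\<^sub>v x = y}"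
  shows "vectorspace.dim class_ring ((module_vec TYPE('a) n)\<lparr>carrier := mat_kernel E\<rparr>) = vec_space.rank n D"
proof -
  have "vec_space.col_space n D = {y. \<exists>x\<in>carrier_vec k. D *\<^sub>v x = y}"
    unfolding vec_space.col_space_eq[OF D] using D by auto
  then have "mat_kernel E = LinearCombinations.module.span class_ring (module_vec TYPE('a) n) (set (cols D))"
    using eq unfolding vec_space.col_space_def by simp
  then show ?thesis unfolding vec_space.rank_def by simp
qed

lemma mat_mult_entry: "A \<in> carrier_mat r k \<Longrightarrow> B \<in> carrier_mat k c \<Longrightarrow> i < r \<Longrightarrow> j < c \<Longrightarrow>
   (A * B) $$ (i,j) = (\<Sum>l<k. A $$ (i,l) * B $$ (l,j))"
  by (simp add: scalar_prod_def atLeast0LessThan)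

lemma mat_vec_entry: "A \<in> carrier_mat r k \<Longrightarrow> v \<in> carrier_vec k \<Longrightarrow> i < r \<Longrightarrow>
   (A *\<^sub>v v) $ i = (\<Sum>l<k. A $$ (i,l) * v $ l)"
  by (simp add: scalar_prod_def atLeast0LessThan)

lemma left_inv_or_ker:
  fixes M :: "'a::field mat"
  shows "M \<in> carrier_mat m n \<Longrightarrow> (\<exists>z\<in>carrier_vec n. z \<noteq> 0\<^sub>v n \<and> M *\<^sub>v z = 0\<^sub>v m) \<or> (\<exists>Z\<in>carrier_mat n m. Z * M = 1\<^sub>m n)"
proof (induction n arbitrary: M)
  case 0
  have "0\<^sub>m 0 m * M = 1\<^sub>m 0" using 0 by (intro eq_matI) auto
  then show ?case by (intro disjI2 bexI[of _ "0\<^sub>m 0 m"]) auto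
next
  case (Suc n)
  have M: "M \<in> carrier_mat m (Suc n)" by fact
  define M' where "M' = mat m n (\<lambda>(i,j). M $$ (i,j))"
  define c where "c = col M n"
  have M': "M' \<in> carrier_mat m n" unfolding M'_def by simp
  have c: "c \<in> carrier_vec m" unfolding c_def by (rule col_carrier_vec[OF _ M]) simp
  have M'e: "\<And>i j. i < m \<Longrightarrow> j < n \<Longrightarrow> M' $$ (i,j) = M $$ (i,j)" unfolding M'_def by simp
  have ce: "\<And>i. i < m \<Longrightarrow> c $ i = M $$ (i,n)" unfolding c_def using M by simp
  have Mv: "\<And>z i. z \<in> carrier_vec (Suc n) \<Longrightarrow> i < m \<Longrightarrow>
     (M *\<^sub>v z) $ i = (\<Sum>j<n. M' $$ (i,j) * z $ j) + c $ i * z $ n"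
  proof -
    fix z :: "'a vec" and i assume z: "z \<in> carrier_vec (Suc n)" and i: "i < m"
    have "(M *\<^sub>v z) $ i = (\<Sum>l<Suc n. M $$ (i,l) * z $ l)" by (rule mat_vec_entry[OF M z i])
    also have "\<dots> = (\<Sum>l<n. M $$ (i,l) * z $ l) + M $$ (i,n) * z $ n" by (rule sum.lessThan_Suc)
    also have "(\<Sum>l<n. M $$ (i,l) * z $ l) = (\<Sum>j<n. M' $$ (i,j) * z $ j)"
      using i M'e by (intro sum.cong) auto
    finally show "(M *\<^sub>v z) $ i = (\<Sum>j<n. M' $$ (i,j) * z $ j) + c $ i * z $ n" using ce[OF i] by simp
  qed
  from Suc.IH[OF M'] show ?case
  proof
    assume "\<exists>z\<in>carrier_vec n. z \<noteq> 0\<^sub>v n \<and> M' *\<^sub>v z = 0\<^sub>v m"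
    then obtain z' where z': "z' \<in> carrier_vec n" "z' \<noteq> 0\<^sub>v n" "M' *\<^sub>v z' = 0\<^sub>v m" by blast
    define z where "z = vec (Suc n) (\<lambda>j. if j < n then z' $ j else 0)"
    have z: "z \<in> carrier_vec (Suc n)" unfolding z_def by simp
    have "M *\<^sub>v z = 0\<^sub>v m"
    proof (rule eq_vecI)
      fix i assume "i < dim_vec (0\<^sub>v m :: 'a vec)"
      then have i: "i < m" by simp
      have "(\<Sum>j<n. M' $$ (i,j) * z $ j) = (\<Sum>j<n. M' $$ (i,j) * z' $ j)"
        by (intro sum.cong) (auto simp: z_def)
      moreover have "z $ n = 0" by (simp add: z_def)
      ultimately have "(M *\<^sub>v z) $ i = (\<Sum>j<n. M' $$ (i,j) * z' $ j)"
        using Mv[OF z i] by simp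
      also have "\<dots> = (M' *\<^sub>v z') $ i" using mat_vec_entry[OF M' z'(1) i] by simp
      finally show "(M *\<^sub>v z) $ i = 0\<^sub>v m $ i" using z'(3) i by simp
    qed (use M in simp)
    moreover have "z \<noteq> 0\<^sub>v (Suc n)"
    proof
      assume "z = 0\<^sub>v (Suc n)"
      have "z' = 0\<^sub>v n"
      proof (rule eq_vecI)
        fix j assume "j < dim_vec (0\<^sub>v n :: 'a vec)"
        then have j: "j < n" by simp
        have "z $ j = 0" using \<open>z = 0\<^sub>v (Suc n)\<close> j by simp
        then show "z' $ j = 0\<^sub>v n $ j" using j by (simp add: z_def)
      qed (use z'(1) in simp)
      then show False using z'(2) by simp
    qed
    ultimately show ?case using z by blast
  next
    assume "\<exists>Z\<in>carrier_mat n m. Z * M' = 1\<^sub>m n"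
    then obtain Z' where Z': "Z' \<in> carrier_mat n m" "Z' * M' = 1\<^sub>m n" by blast
    define zc where "zc = Z' *\<^sub>v c"
    have zc: "zc \<in> carrier_vec n" unfolding zc_def using Z' c by simp
    define c' where "c' = c - M' *\<^sub>v zc"
    have c': "c' \<in> carrier_vec m" unfolding c'_def using c M' zc by simp
    show ?case
    proof (cases "c' = 0\<^sub>v m")
      case True
      define z where "z = vec (Suc n) (\<lambda>j. if j < n then - zc $ j else 1)"
      have z: "z \<in> carrier_vec (Suc n)" unfolding z_def by simp
      have "M *\<^sub>v z = 0\<^sub>v m"
      proof (rule eq_vecI)
        fix i assume "i < dim_vec (0\<^sub>v m :: 'a vec)"
        then have i: "i < m" by simp
        have "(\<Sum>j<n. M' $$ (i,j) * z $ j) = - (\<Sum>j<n. M' $$ (i,j) * zc $ j)"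
          by (simp add: z_def sum_negf[symmetric])
        moreover have "z $ n = 1" by (simp add: z_def)
        ultimately have "(M *\<^sub>v z) $ i = - (\<Sum>j<n. M' $$ (i,j) * zc $ j) + c $ i"
          using Mv[OF z i] by simp
        also have "(\<Sum>j<n. M' $$ (i,j) * zc $ j) = (M' *\<^sub>v zc) $ i" using mat_vec_entry[OF M' zc i] by simp
        also have "- (M' *\<^sub>v zc) $ i + c $ i = c' $ i" unfolding c'_def using i c M' zc by simp
        finally show "(M *\<^sub>v z) $ i = 0\<^sub>v m $ i" using True i by simp
      qed (use M in simp)
      moreover have "z \<noteq> 0\<^sub>v (Suc n)"
      proof
        assume "z = 0\<^sub>v (Suc n)"
        then have "z $ n = 0" by simp
        then show False by (simp add: z_def)
      qed
      ultimately show ?thesis using z by blast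
    next
      case False
      then obtain k where k: "k < m" "c' $ k \<noteq> 0" 
      proof -
        have "\<exists>k<m. c' $ k \<noteq> 0"
        proof (rule ccontr)
          assume "\<not> (\<exists>k<m. c' $ k \<noteq> 0)"
          then have "c' = 0\<^sub>v m" using c' by (intro eq_vecI) auto
          then show False using False by simp
        qed
        then show ?thesis using that by blast
      qed
      define P where "P = 1\<^sub>m m - M' * Z'"
      have P: "P \<in> carrier_mat m m" unfolding P_def using M' Z' by (intro minus_carrier_mat mult_carrier_mat)
      have PM: "P * M' = 0\<^sub>m m n"
      proof -
        have "P * M' = 1\<^sub>m m * M' - M' * Z' * M'" unfolding P_def using M' Z'
          by (intro minus_mult_distrib_mat) auto
        also have "M' * Z' * M' = M'" using M' Z' by (simp add: Z'(2))
        finally show ?thesis using M' by simp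
      qed
      have Pc: "P *\<^sub>v c = c'"
      proof -
        have "P *\<^sub>v c = 1\<^sub>m m *\<^sub>v c - (M' * Z') *\<^sub>v c" unfolding P_def using M' Z' c
          by (intro minus_mult_distrib_mat_vec) auto
        also have "(M' * Z') *\<^sub>v c = M' *\<^sub>v zc" unfolding zc_def using M' Z' c by (simp add: assoc_mult_mat_vec)
        finally show ?thesis unfolding c'_def using c by simp
      qed
      define phi where "phi = (\<lambda>l. P $$ (k,l) / c' $ k)"
      have F3: "(\<Sum>l<m. phi l * M' $$ (l,j)) = 0" if j: "j < n" for j
      proof -
        have "(\<Sum>l<m. phi l * M' $$ (l,j)) = (\<Sum>l<m. P $$ (k,l) * M' $$ (l,j)) / c' $ k"
          unfolding phi_def by (simp add: sum_divide_distrib)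
        also have "(\<Sum>l<m. P $$ (k,l) * M' $$ (l,j)) = (P * M') $$ (k,j)"
          using mat_mult_entry[OF P M' k(1) j] by simp
        finally show ?thesis unfolding PM using k j by simp
      qed
      have F4: "(\<Sum>l<m. phi l * c $ l) = 1"
      proof -
        have "(\<Sum>l<m. phi l * c $ l) = (\<Sum>l<m. P $$ (k,l) * c $ l) / c' $ k"
          unfolding phi_def by (simp add: sum_divide_distrib)
        also have "(\<Sum>l<m. P $$ (k,l) * c $ l) = (P *\<^sub>v c) $ k"
          using mat_vec_entry[OF P c k(1)] by simp
        finally show ?thesis unfolding Pc using k by simp
      qed
      have F1: "(\<Sum>l<m. Z' $$ (i,l) * M' $$ (l,j)) = (if i = j then 1 else 0)" if "i < n" "j < n" for i j
        using mat_mult_entry[OF Z'(1) M' that] Z'(2) that by simp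
      have F2: "(\<Sum>l<m. Z' $$ (i,l) * c $ l) = zc $ i" if "i < n" for i
        using mat_vec_entry[OF Z'(1) c that] unfolding zc_def by simp
      define Z where "Z = mat (Suc n) m (\<lambda>(i,l). if i < n then Z' $$ (i,l) - zc $ i * phi l else phi l)"
      have Z: "Z \<in> carrier_mat (Suc n) m" unfolding Z_def by simp
      have "Z * M = 1\<^sub>m (Suc n)"
      proof (rule eq_matI)
        fix i j assume i: "i < dim_row (1\<^sub>m (Suc n) :: 'a mat)" and j: "j < dim_col (1\<^sub>m (Suc n) :: 'a mat)"
        then have i': "i < Suc n" and j': "j < Suc n" by auto
        have Mcol: "M $$ (l, j) = (if j < n then M' $$ (l,j) else c $ l)" if "l < m" for l
          using that j' M'e ce by (auto simp: less_Suc_eq)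
        have "(Z * M) $$ (i,j) = (\<Sum>l<m. Z $$ (i,l) * M $$ (l,j))"
          by (rule mat_mult_entry[OF Z M i' j'])
        also have "\<dots> = (\<Sum>l<m. (if i < n then Z' $$ (i,l) - zc $ i * phi l else phi l) * (if j < n then M' $$ (l,j) else c $ l))"
          by (intro sum.cong refl) (simp add: Z_def Mcol i')
        also have "\<dots> = 1\<^sub>m (Suc n) $$ (i,j)"
        proof (cases "i < n")
          case True
          note iT = True
          show ?thesis
          proof (cases "j < n")
            case True
            have "(\<Sum>l<m. (Z' $$ (i,l) - zc $ i * phi l) * M' $$ (l,j))
                = (\<Sum>l<m. Z' $$ (i,l) * M' $$ (l,j)) - zc $ i * (\<Sum>l<m. phi l * M' $$ (l,j))"
              by (simp add: algebra_simps sum_subtractf sum_distrib_left)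
            then show ?thesis using iT True F1 F3 i j by simp
          next
            case False
            then have jn: "j = n" using j' by simp
            have "(\<Sum>l<m. (Z' $$ (i,l) - zc $ i * phi l) * c $ l)
                = (\<Sum>l<m. Z' $$ (i,l) * c $ l) - zc $ i * (\<Sum>l<m. phi l * c $ l)"
              by (simp add: algebra_simps sum_subtractf sum_distrib_left)
            then show ?thesis using iT False F2 F4 i j jn by simp
          qed
        next
          case False
          then have iN: "i = n" using i' by simp
          show ?thesis
          proof (cases "j < n")
            case True
            then show ?thesis using iN F3 i j by simp
          next
            case False
            then show ?thesis using iN F4 i j' by simp
          qed
        qed
        finally show "(Z * M) $$ (i,j) = 1\<^sub>m (Suc n) $$ (i,j)" .
      qed (use Z M in auto)
      then show ?thesis using Z by blast
    qed
  qed
qed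

lemma left_inv_exists:
  fixes M :: "'a::field mat"
  assumes M: "M \<in> carrier_mat m n" and k: "mat_kernel M = {0\<^sub>v n}"
  shows "\<exists>Z\<in>carrier_mat n m. Z * M = 1\<^sub>m n"
proof -
  have "\<not> (\<exists>z\<in>carrier_vec n. z \<noteq> 0\<^sub>v n \<and> M *\<^sub>v z = 0\<^sub>v m)"
  proof
    assume "\<exists>z\<in>carrier_vec n. z \<noteq> 0\<^sub>v n \<and> M *\<^sub>v z = 0\<^sub>v m"
    then obtain z where "z \<in> carrier_vec n" "z \<noteq> 0\<^sub>v n" "M *\<^sub>v z = 0\<^sub>v m" by blast
    then have "z \<in> mat_kernel M" using M by (intro mat_kernelI) auto
    then show False using k \<open>z \<noteq> 0\<^sub>v n\<close> by auto
  qed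
  then show ?thesis using left_inv_or_ker[OF M] by blast
qed

definition conjR :: "('f::field,'n::{finite,ab_group_add}) rr \<Rightarrow> ('f,'n) rr" where
  "conjR x = RR (\<lambda>g. un x (- g))"

lemma conjR_mult: "conjR (x * y) = conjR x * conjR (y::('f::field,'n::{finite,ab_group_add}) rr)"
proof -
  have "(\<lambda>g. ga_mult (un x) (un y) (- g)) = ga_mult (\<lambda>g. un x (- g)) (\<lambda>g. un y (- g))"
  proof
    fix g :: 'n
    have "ga_mult (un x) (un y) (- g) = (\<Sum>h\<in>UNIV. un x (- h) * un y (- g - - h))"
      unfolding ga_mult_def by (rule sum_negate[symmetric, where f="\<lambda>h. un x h * un y (- g - h)"])
    also have "\<dots> = ga_mult (\<lambda>g. un x (- g)) (\<lambda>g. un y (- g)) g"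
      unfolding ga_mult_def by (simp add: algebra_simps)
    finally show "ga_mult (un x) (un y) (- g) = ga_mult (\<lambda>g. un x (- g)) (\<lambda>g. un y (- g)) g" .
  qed
  then show ?thesis by (simp add: conjR_def times_rr_def)
qed

lemma conjR_add: "conjR (x + y) = conjR x + conjR (y::('f::field,'n::{finite,ab_group_add}) rr)"
  by (simp add: conjR_def plus_rr_def)

lemma conjR_zero: "conjR (0::('f::field,'n::{finite,ab_group_add}) rr) = 0"
  by (simp add: conjR_def zero_rr_def)

lemma conjR_one: "conjR (1::('f::field,'n::{finite,ab_group_add}) rr) = 1"
  by (simp add: conjR_def one_rr_def ga_one_def)

lemma conjR_sum: "conjR (sum f S) = (\<Sum>s\<in>S. conjR (f s :: ('f::field,'n::{finite,ab_group_add}) rr))"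
  by (induction S rule: infinite_finite_induct) (auto simp: conjR_zero conjR_add)

definition starM :: "('f::field,'n::{finite,ab_group_add}) grpalg mat \<Rightarrow> ('f,'n) grpalg mat" where
  "starM X = mat (dim_col X) (dim_row X) (\<lambda>(i,j). (\<lambda>g. (X $$ (j,i)) (- g)))"

lemma lift_transpose: "transpose_mat (lift_mat X) = lift_mat (starM (X::('f::field,'n::{finite,ab_group_add}) grpalg mat))"
proof (rule eq_matI)
  fix s t assume s: "s < dim_row (lift_mat (starM X))" and t: "t < dim_col (lift_mat (starM X))"
  have s': "s < dim_col X * CARD('n)" and t': "t < dim_row X * CARD('n)"
    using s t by (simp_all add: lift_mat_def starM_def)
  have sd: "s div CARD('n) < dim_col X" and td: "t div CARD('n) < dim_row X"
    using s' t' by (simp_all add: less_mult_imp_div_less)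
  have sm: "s mod CARD('n) < CARD('n)" and tm: "t mod CARD('n) < CARD('n)" by simp_all
  have "transpose_mat (lift_mat X) $$ (s,t) = L_N (X $$ (t div CARD('n), s div CARD('n))) $$ (t mod CARD('n), s mod CARD('n))"
    using s' t' by (simp add: lift_mat_def)
  also have "\<dots> = (X $$ (t div CARD('n), s div CARD('n))) (grp_enum ! (t mod CARD('n)) - grp_enum ! (s mod CARD('n)))"
    by (rule L_N_entry[OF tm sm])
  also have "\<dots> = (starM X $$ (s div CARD('n), t div CARD('n))) (grp_enum ! (s mod CARD('n)) - grp_enum ! (t mod CARD('n)))"
    using sd td by (simp add: starM_def)
  also have "\<dots> = L_N (starM X $$ (s div CARD('n), t div CARD('n))) $$ (s mod CARD('n), t mod CARD('n))"
    by (rule L_N_entry[OF sm tm, symmetric])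
  also have "\<dots> = lift_mat (starM X) $$ (s,t)"
    using s' t' by (simp add: lift_mat_def starM_def)
  finally show "transpose_mat (lift_mat X) $$ (s,t) = lift_mat (starM X) $$ (s,t)" .
qed (simp_all add: lift_mat_def starM_def)

lemma lift_carrier: assumes "X \<in> carrier_mat r c"
  shows "lift_mat (X::('f::field,'n::{finite,ab_group_add}) grpalg mat) \<in> carrier_mat (r * CARD('n)) (c * CARD('n))"
proof -
  have d: "dim_row X = r" "dim_col X = c" using assms by auto
  show ?thesis unfolding lift_mat_def d by (rule mat_carrier)
qed

lemma starM_carrier: assumes "X \<in> carrier_mat r c" shows "starM X \<in> carrier_mat c r"
proof -
  have d: "dim_row X = r" "dim_col X = c" using assms by auto
  show ?thesis unfolding starM_def d by (rule mat_carrier)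
qed

lemma vecF_zero: "vecF (0\<^sub>v k :: ('f::field,'n::{finite,ab_group_add}) rr vec) = 0\<^sub>v (k * CARD('n))"
proof (rule eq_vecI)
  fix i assume "i < dim_vec (0\<^sub>v (k * CARD('n)) :: 'f vec)"
  then have i: "i < k * CARD('n)" by simp
  then have "i div CARD('n) < k" by (simp add: less_mult_imp_div_less)
  then show "vecF (0\<^sub>v k :: ('f,'n) rr vec) $ i = 0\<^sub>v (k * CARD('n)) $ i"
    using i by (simp add: vecF_def zero_rr_def)
qed (simp add: dim_vecF)

lemma Q_exists:
  fixes B :: "('f::field,'n::{finite,ab_group_add}) grpalg mat"
  assumes B: "B \<in> carrier_mat q b" and k: "mat_kernel (lift_mat B) = {0\<^sub>v (b * CARD('n))}"
  shows "\<exists>Q\<in>carrier_mat b q. Q * map_mat RR B = 1\<^sub>m b"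
proof -
  let ?N = "CARD('n)"
  have LB: "lift_mat B \<in> carrier_mat (q * ?N) (b * ?N)" by (rule lift_carrier[OF B])
  obtain Zf where Zf: "Zf \<in> carrier_mat (b * ?N) (q * ?N)" "Zf * lift_mat B = 1\<^sub>m (b * ?N)"
    using left_inv_exists[OF LB k] by blast
  have T: "lift_mat (starM B) * transpose_mat Zf = 1\<^sub>m (b * ?N)"
  proof -
    have "transpose_mat (Zf * lift_mat B) = transpose_mat (lift_mat B) * transpose_mat Zf"
      by (rule transpose_mult[OF Zf(1) LB])
    then show ?thesis unfolding Zf(2) lift_transpose by simp
  qed
  have SB: "starM B \<in> carrier_mat b q" by (rule starM_carrier[OF B])
  have LSB: "lift_mat (starM B) \<in> carrier_mat (b * ?N) (q * ?N)" by (rule lift_carrier[OF SB])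
  define z where "z = (\<lambda>j. vecR q (transpose_mat Zf *\<^sub>v vecF (unit_vec b j :: ('f,'n) rr vec)) :: ('f,'n) rr vec)"
  have z: "z j \<in> carrier_vec q" for j unfolding z_def by (rule vecR_carrier)
  have zeq: "map_mat RR (starM B) *\<^sub>v z j = unit_vec b j" for j
  proof -
    have u: "vecF (unit_vec b j :: ('f,'n) rr vec) \<in> carrier_vec (b * ?N)" by (rule vecF_carrier) simp
    have y: "transpose_mat Zf *\<^sub>v vecF (unit_vec b j :: ('f,'n) rr vec) \<in> carrier_vec (q * ?N)"
      using Zf(1) u by simp
    have "vecF (map_mat RR (starM B) *\<^sub>v z j) = lift_mat (starM B) *\<^sub>v vecF (z j)"
      by (rule lift_mult_vecF[OF SB z, symmetric])
    also have "vecF (z j) = transpose_mat Zf *\<^sub>v vecF (unit_vec b j :: ('f,'n) rr vec)"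
      unfolding z_def by (rule vecF_vecR[OF y])
    also have "lift_mat (starM B) *\<^sub>v (transpose_mat Zf *\<^sub>v vecF (unit_vec b j :: ('f,'n) rr vec))
       = (lift_mat (starM B) * transpose_mat Zf) *\<^sub>v vecF (unit_vec b j :: ('f,'n) rr vec)"
      using LSB Zf(1) u by (simp add: assoc_mult_mat_vec)
    also have "\<dots> = vecF (unit_vec b j :: ('f,'n) rr vec)" unfolding T using u by simp
    finally have eqv: "vecF (map_mat RR (starM B) *\<^sub>v z j) = vecF (unit_vec b j :: ('f,'n) rr vec)" .
    show ?thesis by (rule vecF_inj[where k=b, OF _ _ eqv]) (use SB z in auto)
  qed
  define Q' where "Q' = mat q b (\<lambda>(k,j). z j $ k)"
  define Q where "Q = mat b q (\<lambda>(j,k). conjR (Q' $$ (k,j)))"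
  have Q: "Q \<in> carrier_mat b q" unfolding Q_def by simp
  have "Q * map_mat RR B = 1\<^sub>m b"
  proof (rule eq_matI)
    fix j l assume j: "j < dim_row (1\<^sub>m b :: ('f,'n) rr mat)" and l: "l < dim_col (1\<^sub>m b :: ('f,'n) rr mat)"
    then have j': "j < b" and l': "l < b" by auto
    have Bm: "map_mat RR B \<in> carrier_mat q b" using B by simp
    have SBm: "map_mat RR (starM B) \<in> carrier_mat b q" using SB by simp
    have cc: "conjR (conjR x) = x" for x :: "('f,'n) rr" by (simp add: conjR_def)
    have "(Q * map_mat RR B) $$ (j,l) = (\<Sum>k<q. Q $$ (j,k) * map_mat RR B $$ (k,l))"
      by (rule mat_mult_entry[OF Q Bm j' l'])
    also have "\<dots> = (\<Sum>k<q. conjR (z j $ k) * RR (B $$ (k,l)))"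
      using j' l' B by (intro sum.cong refl) (simp add: Q_def Q'_def)
    also have "\<dots> = (\<Sum>k<q. conjR (conjR (RR (B $$ (k,l))) * z j $ k))"
      by (intro sum.cong refl) (simp add: conjR_mult cc mult.commute)
    also have "\<dots> = conjR (\<Sum>k<q. conjR (RR (B $$ (k,l))) * z j $ k)"
      by (rule conjR_sum[symmetric])
    also have "(\<Sum>k<q. conjR (RR (B $$ (k,l))) * z j $ k) = (\<Sum>k<q. map_mat RR (starM B) $$ (l,k) * z j $ k)"
      using l' B by (intro sum.cong refl) (simp add: starM_def conjR_def)
    also have "\<dots> = (map_mat RR (starM B) *\<^sub>v z j) $ l"
      by (rule mat_vec_entry[OF SBm z l', symmetric])
    also have "\<dots> = (if l = j then 1 else 0)" unfolding zeq using l' j' by simp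
    also have "conjR \<dots> = 1\<^sub>m b $$ (j,l)" using j' l' by (auto simp: conjR_one conjR_zero)
    finally show "(Q * map_mat RR B) $$ (j,l) = 1\<^sub>m b $$ (j,l)" .
  qed (use Q B in auto)
  then show ?thesis using Q by blast
qed

lemma map_kron: "map_mat RR (ga_kron X Y) = kr (map_mat RR X) (map_mat RR (Y::('f::field,'n::{finite,ab_group_add}) grpalg mat))"
proof (rule eq_matI)
  fix i j assume i: "i < dim_row (kr (map_mat RR X) (map_mat RR Y))" and j: "j < dim_col (kr (map_mat RR X) (map_mat RR Y))"
  then have i': "i < dim_row X * dim_row Y" and j': "j < dim_col X * dim_col Y" by auto
  have "i div dim_row Y < dim_row X \<and> i mod dim_row Y < dim_row Y" using i' by (rule divmod_bound)
  moreover have "j div dim_col Y < dim_col X \<and> j mod dim_col Y < dim_col Y" using j' by (rule divmod_bound)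
  ultimately show "map_mat RR (ga_kron X Y) $$ (i, j) = kr (map_mat RR X) (map_mat RR Y) $$ (i, j)"
    using i' j' by (simp add: ga_kron_def kr_def times_rr_def)
qed (simp_all add: ga_kron_def kr_def)

lemma map_id: "map_mat RR (ga_id m :: ('f::field,'n::{finite,ab_group_add}) grpalg mat) = 1\<^sub>m m"
  by (rule eq_matI) (auto simp: ga_id_def one_rr_def zero_rr_def ga_zero_def)

lemma map_hcat: "dim_row X = dim_row Y \<Longrightarrow> map_mat f (hcat X Y) = hcat (map_mat f X) (map_mat f Y)"
  by (rule eq_matI) (auto simp: hcat_def)

lemma map_vcat: "dim_col X = dim_col Y \<Longrightarrow> map_mat f (vcat X Y) = vcat (map_mat f X) (map_mat f Y)"
  by (rule eq_matI) (auto simp: vcat_def)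

lemma map_neg: "map_mat RR (ga_neg_mat X) = - map_mat RR (X::('f::field,'n::{finite,ab_group_add}) grpalg mat)"
  by (rule eq_matI) (auto simp: ga_neg_mat_def uminus_rr_def ga_uminus_def)

lemma dim_ga_kron[simp]: "dim_row (ga_kron X Y) = dim_row X * dim_row Y" "dim_col (ga_kron X Y) = dim_col X * dim_col Y"
  unfolding ga_kron_def by auto

lemma dim_ga_neg[simp]: "dim_row (ga_neg_mat X) = dim_row X" "dim_col (ga_neg_mat X) = dim_col X"
  unfolding ga_neg_mat_def by auto

lemma dim_ga_id[simp]: "dim_row (ga_id m) = m" "dim_col (ga_id m) = m"
  unfolding ga_id_def by auto

theorem mainTheorem11:
  fixes A B :: "('f::{field,finite}, 'n::{finite,ab_group_add}) grpalg mat"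
    and rA nA rB nB :: nat
  assumes "A \<in> carrier_mat rA nA" and "B \<in> carrier_mat rB nB"
    and "mat_kernel (lift_mat A) = {0\<^sub>v (nA * CARD('n))}"
    and "mat_kernel (lift_mat B) = {0\<^sub>v (nB * CARD('n))}"
  shows "LP_dim A B = 0"
proof -
  let ?N = "CARD('n)"
  note Ac = assms(1) and Bc = assms(2)
  define Am where "Am = map_mat RR A"
  define Bm where "Bm = map_mat RR B"
  have Amc: "Am \<in> carrier_mat rA nA" unfolding Am_def using Ac by simp
  have Bmc: "Bm \<in> carrier_mat rB nB" unfolding Bm_def using Bc by simp
  obtain Q where Q: "Q \<in> carrier_mat nB rB" "Q * Bm = 1\<^sub>m nB"
    using Q_exists[OF Bc assms(4)] unfolding Bm_def by blast
  have injA: "y = 0\<^sub>v nA" if y: "y \<in> carrier_vec nA" and z: "Am *\<^sub>v y = 0\<^sub>v rA" for y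
  proof -
    have "lift_mat A *\<^sub>v vecF y = vecF (Am *\<^sub>v y)" unfolding Am_def by (rule lift_mult_vecF[OF Ac y])
    also have "\<dots> = 0\<^sub>v (rA * ?N)" unfolding z by (rule vecF_zero)
    finally have "vecF y \<in> mat_kernel (lift_mat A)"
      by (intro mat_kernelI[OF lift_carrier[OF Ac]] vecF_carrier[OF y])
    then have "vecF y = vecF (0\<^sub>v nA :: ('f,'n) rr vec)" unfolding assms(3) vecF_zero by simp
    then show ?thesis by (rule vecF_inj[OF y zero_carrier_vec])
  qed
  note pr = Amc Bmc Q(1) Q(2) injA
  define HXr where "HXr = hcat (ga_kron A (ga_id rB)) (ga_kron (ga_id rA) B)"
  define HZr where "HZr = vcat (ga_kron (ga_id nA) B) (ga_neg_mat (ga_kron A (ga_id nB)))"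
  have dA: "dim_row A = rA" "dim_col A = nA" using Ac by auto
  have dB: "dim_row B = rB" "dim_col B = nB" using Bc by auto
  have hx: "LP_HX A B = lift_mat HXr" unfolding LP_HX_def HXr_def dA dB ..
  have hz: "LP_HZ A B = transpose_mat (lift_mat HZr)" unfolding LP_HZ_def HZr_def dA dB ..
  have eE: "EE Am Bm rA rB = hcat (kr Am (1\<^sub>m rB)) (kr (1\<^sub>m rA) Bm)" by (rule EE_def[OF pr])
  have eD: "DD Am Bm nA nB = vcat (kr (1\<^sub>m nA) Bm) (- kr Am (1\<^sub>m nB))" by (rule DD_def[OF pr])
  have "map_mat RR HXr = hcat (kr Am (1\<^sub>m rB)) (kr (1\<^sub>m rA) Bm)"
    unfolding HXr_def Am_def Bm_def
    by (subst map_hcat) (simp_all add: dA dB map_kron map_id)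
  then have mx: "map_mat RR HXr = EE Am Bm rA rB" unfolding eE .
  have "map_mat RR HZr = vcat (kr (1\<^sub>m nA) Bm) (- kr Am (1\<^sub>m nB))"
    unfolding HZr_def Am_def Bm_def
    by (subst map_vcat) (simp_all add: dA dB map_kron map_id map_neg)
  then have mz: "map_mat RR HZr = DD Am Bm nA nB" unfolding eD .
  define nT where "nT = nA * rB + rA * nB"
  define k where "k = nA * nB"
  have HXrc: "HXr \<in> carrier_mat (rA * rB) nT"
    using EE_carrier[OF pr] unfolding mx[symmetric] nT_def by simp
  have HZrc: "HZr \<in> carrier_mat nT k"
    using DD_carrier[OF pr] unfolding mz[symmetric] nT_def k_def by simp
  define HX where "HX = lift_mat HXr"
  define Df where "Df = lift_mat HZr"
  have HXc: "HX \<in> carrier_mat (rA * rB * ?N) (nT * ?N)" unfolding HX_def by (rule lift_carrier[OF HXrc])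
  have Dfc: "Df \<in> carrier_mat (nT * ?N) (k * ?N)" unfolding Df_def by (rule lift_carrier[OF HZrc])
  have DDc: "DD Am Bm nA nB \<in> carrier_mat nT k" using DD_carrier[OF pr] unfolding nT_def k_def .
  have EEc: "EE Am Bm rA rB \<in> carrier_mat (rA * rB) nT" using EE_carrier[OF pr] unfolding nT_def .
  have Dfv: "Df *\<^sub>v vecF w = vecF (DD Am Bm nA nB *\<^sub>v w)" if "w \<in> carrier_vec k" for w
    unfolding Df_def mz[symmetric] by (rule lift_mult_vecF[OF HZrc that])
  have HXv: "HX *\<^sub>v vecF x = vecF (EE Am Bm rA rB *\<^sub>v x)" if "x \<in> carrier_vec nT" for x
    unfolding HX_def mx[symmetric] by (rule lift_mult_vecF[OF HXrc that])
  have K1: "mat_kernel Df = {0\<^sub>v (k * ?N)}"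
  proof
    show "{0\<^sub>v (k * ?N)} \<subseteq> mat_kernel Df" using Dfc by (auto intro!: mat_kernelI)
    show "mat_kernel Df \<subseteq> {0\<^sub>v (k * ?N)}"
    proof
      fix v assume "v \<in> mat_kernel Df"
      then have v: "v \<in> carrier_vec (k * ?N)" and z: "Df *\<^sub>v v = 0\<^sub>v (nT * ?N)"
        using mat_kernelD[OF Dfc] by auto
      define w :: "('f,'n) rr vec" where "w = vecR k v"
      have w: "w \<in> carrier_vec k" unfolding w_def by (rule vecR_carrier)
      have vw: "vecF w = v" unfolding w_def by (rule vecF_vecR[OF v])
      have eqv: "vecF (DD Am Bm nA nB *\<^sub>v w) = vecF (0\<^sub>v nT :: ('f,'n) rr vec)"
        using Dfv[OF w] z vw vecF_zero by metis
      have "DD Am Bm nA nB *\<^sub>v w = 0\<^sub>v nT"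
        by (rule vecF_inj[OF _ zero_carrier_vec eqv]) (use DDc w in simp)
      then have "w = 0\<^sub>v k" unfolding k_def by (intro chain_inj[OF pr]) (use w in \<open>simp_all add: k_def nT_def\<close>)
      then have "v = vecF (0\<^sub>v k :: ('f,'n) rr vec)" using vw by simp
      also have "\<dots> = 0\<^sub>v (k * ?N)" by (rule vecF_zero)
      finally show "v \<in> {0\<^sub>v (k * ?N)}" by simp
    qed
  qed
  have K2: "mat_kernel HX = {y. \<exists>x\<in>carrier_vec (k * ?N). Df *\<^sub>v x = y}"
  proof
    show "mat_kernel HX \<subseteq> {y. \<exists>x\<in>carrier_vec (k * ?N). Df *\<^sub>v x = y}"
    proof
      fix u assume "u \<in> mat_kernel HX"
      then have u: "u \<in> carrier_vec (nT * ?N)" and z: "HX *\<^sub>v u = 0\<^sub>v (rA * rB * ?N)"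
        using mat_kernelD[OF HXc] by auto
      define x :: "('f,'n) rr vec" where "x = vecR nT u"
      have x: "x \<in> carrier_vec nT" unfolding x_def by (rule vecR_carrier)
      have ux: "vecF x = u" unfolding x_def by (rule vecF_vecR[OF u])
      have eqv: "vecF (EE Am Bm rA rB *\<^sub>v x) = vecF (0\<^sub>v (rA * rB) :: ('f,'n) rr vec)"
        using HXv[OF x] z ux vecF_zero by metis
      have "EE Am Bm rA rB *\<^sub>v x = 0\<^sub>v (rA * rB)"
        by (rule vecF_inj[OF _ zero_carrier_vec eqv]) (use EEc x in simp)
      then obtain w where w: "w \<in> carrier_vec (nA * nB)" and xw: "x = DD Am Bm nA nB *\<^sub>v w"
        using chain_exact[OF pr, of x] x unfolding nT_def by auto
      have "Df *\<^sub>v vecF w = u" using Dfv[of w] w xw ux unfolding k_def by simp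
      moreover have "vecF w \<in> carrier_vec (k * ?N)" using w unfolding k_def by (rule vecF_carrier)
      ultimately show "u \<in> {y. \<exists>x\<in>carrier_vec (k * ?N). Df *\<^sub>v x = y}" by blast
    qed
    show "{y. \<exists>x\<in>carrier_vec (k * ?N). Df *\<^sub>v x = y} \<subseteq> mat_kernel HX"
    proof
      fix y assume "y \<in> {y. \<exists>x\<in>carrier_vec (k * ?N). Df *\<^sub>v x = y}"
      then obtain v where v: "v \<in> carrier_vec (k * ?N)" and yv: "y = Df *\<^sub>v v" by blast
      define w :: "('f,'n) rr vec" where "w = vecR k v"
      have w: "w \<in> carrier_vec k" unfolding w_def by (rule vecR_carrier)
      have vw: "vecF w = v" unfolding w_def by (rule vecF_vecR[OF v])
      have Dw: "DD Am Bm nA nB *\<^sub>v w \<in> carrier_vec nT" using DDc w by simp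
      have y: "y = vecF (DD Am Bm nA nB *\<^sub>v w)" using yv Dfv[OF w] vw by simp
      have "HX *\<^sub>v y = vecF (EE Am Bm rA rB *\<^sub>v (DD Am Bm nA nB *\<^sub>v w))" unfolding y by (rule HXv[OF Dw])
      also have "EE Am Bm rA rB *\<^sub>v (DD Am Bm nA nB *\<^sub>v w) = 0\<^sub>v (rA * rB)"
        by (rule chain_comp[OF pr]) (use w in \<open>unfold k_def\<close>)
      finally have "HX *\<^sub>v y = 0\<^sub>v (rA * rB * ?N)" by (simp add: vecF_zero)
      moreover have "y \<in> carrier_vec (nT * ?N)" using yv v Dfc by simp
      ultimately show "y \<in> mat_kernel HX" by (rule mat_kernelI[OF HXc, rotated])
    qed
  qed
  have r1: "vec_space.rank (rA * rB * ?N) HX + vectorspace.dim class_ring ((module_vec TYPE('f) (nT * ?N))\<lparr>carrier := mat_kernel HX\<rparr>) = nT * ?N"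
    by (rule rank_nullity_mat[OF HXc])
  have r2: "vectorspace.dim class_ring ((module_vec TYPE('f) (nT * ?N))\<lparr>carrier := mat_kernel HX\<rparr>) = vec_space.rank (nT * ?N) Df"
    by (rule kernel_dim_rank[OF Dfc K2])
  have r3: "vec_space.rank (nT * ?N) Df = k * ?N" by (rule rank_inj[OF Dfc K1])
  obtain Z where Z: "Z \<in> carrier_mat (k * ?N) (nT * ?N)" "Z * Df = 1\<^sub>m (k * ?N)"
    using left_inv_exists[OF Dfc K1] by blast
  have DZ: "transpose_mat Df * transpose_mat Z = 1\<^sub>m (k * ?N)"
    using transpose_mult[OF Z(1) Dfc] Z(2) by simp
  have TDc: "transpose_mat Df \<in> carrier_mat (k * ?N) (nT * ?N)" using Dfc by simp
  have r4: "vec_space.rank (k * ?N) (transpose_mat Df) = k * ?N"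
  proof (rule rank_surj[OF TDc])
    fix y :: "'f vec" assume y: "y \<in> carrier_vec (k * ?N)"
    have "transpose_mat Df *\<^sub>v (transpose_mat Z *\<^sub>v y) = (transpose_mat Df * transpose_mat Z) *\<^sub>v y"
      using TDc Z(1) y by (simp add: assoc_mult_mat_vec)
    also have "\<dots> = y" unfolding DZ using y by simp
    finally show "\<exists>x\<in>carrier_vec (nT * ?N). transpose_mat Df *\<^sub>v x = y"
      using Z(1) y by (intro bexI[of _ "transpose_mat Z *\<^sub>v y"]) auto
  qed
  have fx: "frank (LP_HX A B) = vec_space.rank (rA * rB * ?N) HX"
    unfolding frank_def hx HX_def[symmetric] using HXc by simp
  have fz: "frank (LP_HZ A B) = vec_space.rank (k * ?N) (transpose_mat Df)"
    unfolding frank_def hz Df_def[symmetric] using TDc by simp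
  have sum: "frank (LP_HX A B) + frank (LP_HZ A B) = nT * ?N"
    using r1 r2 r3 r4 fx fz by simp
  have "int (?N * (dim_col A * dim_row B + dim_row A * dim_col B)) = int (nT * ?N)"
    unfolding dA dB nT_def by (simp add: mult.commute)
  then show ?thesis unfolding LP_dim_def using sum by linarith
qed

end
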